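(* Let $\mathcal{C}\le\mathbb{F}_q^n$ be a linear code with $q\neq 2$, and assume every codeword of $\mathcal{C}$ has even weight. Let $c\in\mathcal{C}$ be a codeword of weight $2$ with support $\{i,j\}$, and let $x\in\mathcal{C}$ be arbitrary. Then there exists $\lambda\in\mathbb{F}_q$ such that $(x_i,x_j)=(\lambda c_i,\lambda c_j)$.
   Context: The support of $c\in\mathbb{F}_q^n$ is $\{k: c_k\neq 0\}$ and its weight is the size of its support. *)

theory Defs
  imports Main
begin

text \<open>Vectors of \<open>F_q^n\<close> are modelled as functions \<open>'n \<Rightarrow> 'a\<close> with a finite index type \<open>'n\<close>
  (of cardinality n) and a finite field \<open>'a\<close> (of cardinality q).\<close>

definition supp :: "('n \<Rightarrow> 'a::zero) \<Rightarrow> 'n set" where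
  "supp c = {k. c k \<noteq> 0}"

definition weight :: "('n::finite \<Rightarrow> 'a::zero) \<Rightarrow> nat" where
  "weight c = card (supp c)"

definition linear_code :: "('n \<Rightarrow> 'a::field) set \<Rightarrow> bool" where
  "linear_code C \<longleftrightarrow> (\<lambda>_. 0) \<in> C \<and>
     (\<forall>x\<in>C. \<forall>y\<in>C. (\<lambda>k. x k + y k) \<in> C) \<and>
     (\<forall>a. \<forall>x\<in>C. (\<lambda>k. a * x k) \<in> C)"

end

theory Submission
  imports Defs
begin

lemma weight_split:
  fixes y :: "'n::finite \<Rightarrow> 'a::zero"
  assumes "i \<noteq> j"
  shows "weight y = card (supp y - {i,j}) + (if y i \<noteq> 0 then 1 else 0) + (if y j \<noteq> 0 then 1 else 0)"
proof -
  have e: "supp y = (supp y - {i,j}) \<union> (supp y \<inter> {i}) \<union> (supp y \<inter> {j})" by auto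
  have "card (supp y) = card (supp y - {i,j}) + card (supp y \<inter> {i}) + card (supp y \<inter> {j})"
    apply (subst e)
    apply (subst card_Un_disjoint, simp, simp, use assms in auto)
    apply (subst card_Un_disjoint, auto)
    done
  moreover have "card (supp y \<inter> {i}) = (if y i \<noteq> 0 then 1 else 0)" by (auto simp: supp_def)
  moreover have "card (supp y \<inter> {j}) = (if y j \<noteq> 0 then 1 else 0)" by (auto simp: supp_def)
  ultimately show ?thesis by (simp add: weight_def)
qed

theorem lemma3p1:
  fixes C :: "('n::finite \<Rightarrow> 'a::{field,finite}) set"
    and c x :: "'n \<Rightarrow> 'a" and i j :: 'n
  assumes "linear_code C"
    and "card (UNIV :: 'a set) \<noteq> 2"
    and "\<forall>y\<in>C. even (weight y)"
    and "c \<in> C" and "weight c = 2" and "supp c = {i, j}"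
    and "x \<in> C"
  shows "\<exists>l::'a. (x i, x j) = (l * c i, l * c j)"
proof (rule ccontr)
  assume np: "\<not> ?thesis"
  have ij: "i \<noteq> j" using assms(5,6) by (auto simp: weight_def)
  have ci: "c i \<noteq> 0" and cj: "c j \<noteq> 0" using assms(6) by (auto simp: supp_def)
  have cz: "\<And>k. k \<notin> {i,j} \<Longrightarrow> c k = 0" using assms(6) by (auto simp: supp_def)
  define y where "y t = (\<lambda>k. x k + t * c k)" for t
  have yC: "y t \<in> C" for t
  proof -
    have "(\<lambda>k. t * c k) \<in> C" using assms(1,4) unfolding linear_code_def by blast
    moreover have "\<forall>u\<in>C. \<forall>v\<in>C. (\<lambda>k. u k + v k) \<in> C" using assms(1) unfolding linear_code_def by blast
    then have h: "\<forall>v\<in>C. (\<lambda>k. u k + v k) \<in> C" if "u \<in> C" for u using that by blast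
    have "\<forall>v\<in>C. (\<lambda>k. x k + v k) \<in> C" using h[OF assms(7)] .
    then have "(\<lambda>k. x k + (\<lambda>k. t * c k) k) \<in> C" using \<open>(\<lambda>k. t * c k) \<in> C\<close> by (rule bspec)
    then show ?thesis unfolding y_def by simp
  qed
  have ys: "supp (y t) - {i,j} = supp x - {i,j}" for t
    using cz by (auto simp: supp_def y_def)
  have wy: "weight (y t) = card (supp x - {i,j}) + (if y t i \<noteq> 0 then 1 else 0) + (if y t j \<noteq> 0 then 1 else 0)" for t
    using weight_split[OF ij, of "y t"] ys by simp
  define a where "a = - x i / c i"
  define b where "b = - x j / c j"
  have yai: "y a i = 0" using ci by (simp add: y_def a_def field_simps)
  have yaj: "y a j \<noteq> 0"
  proof
    assume h: "y a j = 0"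
    have "(x i, x j) = ((x i / c i) * c i, (x i / c i) * c j)"
      using h ci by (auto simp: y_def a_def field_simps)
    then show False using np by blast
  qed
  have ab: "a \<noteq> b"
  proof
    assume "a = b"
    then have "y a j = 0" using cj by (simp add: y_def b_def field_simps)
    then show False using yaj by simp
  qed
  have "card (UNIV :: 'a set) \<ge> card {0::'a, 1}" by (rule card_mono) auto
  then have "card (UNIV :: 'a set) \<ge> 3" using assms(2) by simp
  then have "card (UNIV - {a,b}) \<ge> 1"
    by (simp add: card_Diff_subset ab)
  then obtain t where t: "t \<noteq> a" "t \<noteq> b"
  proof -
    have "UNIV - {a,b} \<noteq> {}" using \<open>card (UNIV - {a,b}) \<ge> 1\<close> by (metis card.empty not_one_le_zero)
    then obtain t where "t \<in> UNIV - {a,b}" by blast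
    then show ?thesis using that by blast
  qed
  have yti: "y t i \<noteq> 0"
  proof
    assume "y t i = 0" then have "t * c i = - x i" by (simp add: y_def eq_neg_iff_add_eq_0 add.commute)
    then have "t = a" using ci by (simp add: a_def field_simps)
    with t show False by simp
  qed
  have ytj: "y t j \<noteq> 0"
  proof
    assume "y t j = 0" then have "t * c j = - x j" by (simp add: y_def eq_neg_iff_add_eq_0 add.commute)
    then have "t = b" using cj by (simp add: b_def field_simps)
    with t show False by simp
  qed
  have "even (weight (y a))" "even (weight (y t))" using assms(3) yC by auto
  then show False using wy[of a] wy[of t] yai yaj yti ytj by simp
qed

end
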